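(* Assume $\gamma=0$ and that $r$ is not a root of unity. Let $I$ be a two-sided ideal of $L$, $x\in I$, and $x=\sum_{i\in\mathbb Z}x_i$ ($x_i\in L_i$) its homogeneous decomposition, with length $\ell(x)=\#\{i: x_i\neq0\}\ge1$. Then $x_ih^{\ell(x)-1}\in I$ for all $i\in\mathbb Z$.
   Context: Let $r,s\in\mathbb C^\times$ and $\phi\in\mathbb C[x]$; $L=L(\phi,r,s,0)$ is the associative $\mathbb C$-algebra generated by $u,d,h$ subject to $hu=ruh$, $dh=rhd$, $du-sud=\phi(h)$. $L$ is $\mathbb Z$-graded by $\deg u=1,\deg d=-1,\deg h=0$, and $L_i$ is the degree-$i$ component (so $hx_i=r^ix_ih$ for $x_i\in L_i$). *)

theory Defs
  imports Complex_Main "HOL-Computational_Algebra.Polynomial"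
begin

text \<open>The algebra L(phi,r,s,0) is realised as the free associative C-algebra
on u,d,h (finitely supported functions on words) modulo the two-sided ideal
generated by the defining relations.  Ideals of L correspond to ideals of the
free algebra containing that relation ideal.\<close>

datatype gen = U | D | H

type_synonym falg = "gen list \<Rightarrow> complex"

definition fa :: "falg set" where
  "fa = {f. finite {w. f w \<noteq> 0}}"

definition fadd :: "falg \<Rightarrow> falg \<Rightarrow> falg" where
  "fadd f g = (\<lambda>w. f w + g w)"

definition fsmul :: "complex \<Rightarrow> falg \<Rightarrow> falg" where
  "fsmul c f = (\<lambda>w. c * f w)"

definition fsub :: "falg \<Rightarrow> falg \<Rightarrow> falg" where
  "fsub f g = (\<lambda>w. f w - g w)"

text \<open>Multiplication: concatenation of words, extended bilinearly.\<close>
definition fmul :: "falg \<Rightarrow> falg \<Rightarrow> falg" where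
  "fmul f g = (\<lambda>w. \<Sum>k\<le>length w. f (take k w) * g (drop k w))"

definition word :: "gen list \<Rightarrow> falg" where
  "word w = (\<lambda>v. if v = w then 1 else 0)"

definition hpow :: "nat \<Rightarrow> falg" where
  "hpow n = word (replicate n H)"

definition phiH :: "complex poly \<Rightarrow> falg" where
  "phiH p = (\<lambda>w. if w = replicate (length w) H then coeff p (length w) else 0)"

definition is_ideal :: "falg set \<Rightarrow> bool" where
  "is_ideal J \<longleftrightarrow> J \<subseteq> fa \<and> (\<lambda>_. 0) \<in> J \<and> (\<forall>a\<in>J. \<forall>b\<in>J. fadd a b \<in> J) \<and>
     (\<forall>a\<in>J. \<forall>c\<in>fa. fmul c a \<in> J \<and> fmul a c \<in> J)"

definition rels :: "complex \<Rightarrow> complex \<Rightarrow> complex poly \<Rightarrow> falg set" where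
  "rels r s p = {fsub (word [H,U]) (fsmul r (word [U,H])),
                 fsub (word [D,H]) (fsmul r (word [H,D])),
                 fsub (fsub (word [D,U]) (fsmul s (word [U,D]))) (phiH p)}"

text \<open>The two-sided ideal generated by the relations (kernel of F -> L).\<close>
definition RelI :: "complex \<Rightarrow> complex \<Rightarrow> complex poly \<Rightarrow> falg set" where
  "RelI r s p = \<Inter>{J. is_ideal J \<and> rels r s p \<subseteq> J}"

definition wdeg :: "gen list \<Rightarrow> int" where
  "wdeg w = int (length (filter (\<lambda>g. g = U) w)) - int (length (filter (\<lambda>g. g = D) w))"

definition comp :: "int \<Rightarrow> falg \<Rightarrow> falg" where
  "comp i f = (\<lambda>w. if wdeg w = i then f w else 0)"

text \<open>Length of x in L: number of nonzero homogeneous components (nonzero in L).\<close>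
definition hlen :: "complex \<Rightarrow> complex \<Rightarrow> complex poly \<Rightarrow> falg \<Rightarrow> nat" where
  "hlen r s p x = card {i. comp i x \<notin> RelI r s p}"

end

theory Submission
  imports Defs
begin

lemma take_eq_iff_k:
  assumes "k \<le> length v"
  shows "(take k v = a) \<longleftrightarrow> (k = length a \<and> take (length a) v = a)"
  using assms by (metis length_take min.absorb2)

lemma fmul_word_left:
  "fmul (word a) f v = (if take (length a) v = a then f (drop (length a) v) else 0)"
proof -
  have "fmul (word a) f v = (\<Sum>k\<le>length v. if k = length a then
          (if take (length a) v = a then f (drop (length a) v) else 0) else 0)"
    unfolding fmul_def word_def
  proof (rule sum.cong[OF refl])
    fix k assume "k \<in> {..length v}"
    then have kv: "k \<le> length v" by simp
    show "(if take k v = a then 1 else 0) * f (drop k v) = (if k = length a then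
          (if take (length a) v = a then f (drop (length a) v) else 0) else 0)"
    proof (cases "k = length a")
      case True then show ?thesis by simp
    next
      case False
      then have "take k v \<noteq> a" using kv by (metis length_take min.absorb2)
      then show ?thesis using False by simp
    qed
  qed
  also have "\<dots> = (if take (length a) v = a then f (drop (length a) v) else 0)"
    by (auto simp: sum.delta dest: arg_cong[where f=length])
  finally show ?thesis .
qed

lemma drop_eq_iff_k:
  assumes "k \<le> length v"
  shows "(drop k v = b) \<longleftrightarrow> (k = length v - length b \<and> length b \<le> length v \<and> drop (length v - length b) v = b)"
  using assms by (metis diff_diff_cancel diff_le_self length_drop)

lemma fmul_word_right:
  "fmul f (word b) v = (if length b \<le> length v \<and> drop (length v - length b) v = b
      then f (take (length v - length b) v) else 0)"
proof -
  have "fmul f (word b) v = (\<Sum>k\<le>length v. if k = length v - length b then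
          (if length b \<le> length v \<and> drop (length v - length b) v = b then f (take (length v - length b) v) else 0) else 0)"
    unfolding fmul_def word_def
  proof (rule sum.cong[OF refl])
    fix k assume "k \<in> {..length v}"
    then have kv: "k \<le> length v" by simp
    show "f (take k v) * (if drop k v = b then 1 else 0) = (if k = length v - length b then
          (if length b \<le> length v \<and> drop (length v - length b) v = b then f (take (length v - length b) v) else 0) else 0)"
    proof (cases "k = length v - length b \<and> length b \<le> length v")
      case True then show ?thesis by auto
    next
      case False
      then have "drop k v \<noteq> b" using kv by (metis diff_diff_cancel diff_le_self length_drop)
      then show ?thesis using False by auto
    qed
  qed
  also have "\<dots> = (if length b \<le> length v \<and> drop (length v - length b) v = b then f (take (length v - length b) v) else 0)"
    by (auto simp: sum.delta)
  finally show ?thesis .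
qed

lemma fmul_word_word: "fmul (word a) (word b) = word (a @ b)"
proof (rule ext)
  fix v
  have e: "(v = a @ b) \<longleftrightarrow> (take (length a) v = a \<and> drop (length a) v = b)"
    using append_eq_conv_conj[of a b v] by auto
  show "fmul (word a) (word b) v = word (a @ b) v"
    by (simp only: fmul_word_left) (simp add: word_def e)
qed

lemma fmul_word_Nil_left: "fmul (word []) f = f"
  by (simp add: fun_eq_iff fmul_word_left)

lemma fmul_word_Nil_right: "fmul f (word []) = f"
  by (simp add: fun_eq_iff fmul_word_right)

lemma assoc_wfw: "fmul (word a) (fmul f (word b)) = fmul (fmul (word a) f) (word b)"
proof (rule ext)
  fix v
  show "fmul (word a) (fmul f (word b)) v = fmul (fmul (word a) f) (word b) v"
  proof (cases "length a + length b \<le> length v")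
    case True
    have e1: "drop (length (drop (length a) v) - length b) (drop (length a) v) = drop (length v - length b) v"
      using True by simp
    have e2: "take (length a) (take (length v - length b) v) = take (length a) v"
    proof -
      have "min (length a) (length v - length b) = length a" using True by simp
      then show ?thesis by (simp add: take_take)
    qed
    have e3: "drop (length a) (take (length v - length b) v) = take (length (drop (length a) v) - length b) (drop (length a) v)"
      using True by (simp add: drop_take add.commute)
    have tb: "length b \<le> length v - length a" "length a \<le> length v" "length b \<le> length v"
      "length b \<le> length (drop (length a) v)"
      using True by auto
    show ?thesis
      by (simp only: fmul_word_left fmul_word_right e1 e2 e3) (simp add: tb)
  next
    case False
    have l0: "fmul f (word b) (drop (length a) v) = 0" if ta: "take (length a) v = a"
    proof -
      have "length (take (length a) v) = length a" using ta by simp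
      then have "length a \<le> length v" by simp
      then have nb: "\<not> length b \<le> length (drop (length a) v)" using False by simp
      then show ?thesis by (simp only: fmul_word_right) simp
    qed
    have l: "fmul (word a) (fmul f (word b)) v = 0"
      by (simp add: fmul_word_left l0)
    have r0: "fmul (word a) f (take (length v - length b) v) = 0" if "length b \<le> length v"
    proof -
      have "take (length a) (take (length v - length b) v) \<noteq> a"
      proof
        assume "take (length a) (take (length v - length b) v) = a"
        then have "length (take (length a) (take (length v - length b) v)) = length a" by simp
        then show False using False that by simp
      qed
      then show ?thesis by (simp add: fmul_word_left)
    qed
    have r: "fmul (fmul (word a) f) (word b) v = 0"
      using r0 by (simp add: fmul_word_right)
    show ?thesis using l r by simp
  qed
qed

lemma assoc_fww: "fmul (fmul f (word a)) (word b) = fmul f (word (a @ b))"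
proof (rule ext)
  fix v
  show "fmul (fmul f (word a)) (word b) v = fmul f (word (a @ b)) v"
  proof (cases "length a + length b \<le> length v")
    case True
    define u where "u = take (length v - length b) v"
    define n where "n = length v - length (a @ b)"
    have lu: "length u = length v - length b" using True by (simp add: u_def)
    have n2: "length u - length a = n" using lu True by (simp add: n_def)
    have la: "length a \<le> length u" using lu True by simp
    have lb: "length b \<le> length v" using True by simp
    have lab: "length (a @ b) \<le> length v" using True by simp
    have uw: "u @ drop (length v - length b) v = v" by (simp add: u_def)
    have dap0: "drop n (u @ w) = drop n u @ w" for w using n2 by simp
    have dap: "drop n v = drop n u @ drop (length v - length b) v"
      using dap0[of "drop (length v - length b) v"] uw by simp
    have ldn: "length (drop n u) = length a" using n2 la by simp
    have tk: "take n u = take n v"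
    proof -
      have "min n (length v - length b) = n" using n2 lu by simp
      then show ?thesis by (simp add: u_def take_take)
    qed
    have L: "fmul (fmul f (word a)) (word b) v =
       (if drop (length v - length b) v = b then (if drop n u = a then f (take n u) else 0) else 0)"
      by (simp only: fmul_word_right u_def[symmetric] n2) (simp add: la lb)
    have R: "fmul f (word (a @ b)) v = (if drop n v = a @ b then f (take n v) else 0)"
      by (simp only: fmul_word_right n_def[symmetric]) (simp only: lab simp_thms)
    have cnd: "(drop n v = a @ b) \<longleftrightarrow> (drop n u = a \<and> drop (length v - length b) v = b)"
      unfolding dap using ldn by auto
    show ?thesis unfolding L R cnd tk by simp
  next
    case False
    have l: "fmul (fmul f (word a)) (word b) v = 0"
    proof -
      have z: "fmul f (word a) (take (length v - length b) v) = 0" if lb: "length b \<le> length v"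
      proof -
        have "\<not> length a \<le> length (take (length v - length b) v)" using False lb by simp
        then show ?thesis by (simp only: fmul_word_right) simp
      qed
      show ?thesis using False by (simp only: fmul_word_right) auto
    qed
    have r: "fmul f (word (a@b)) v = 0"
    proof -
      have "\<not> length (a @ b) \<le> length v" using False by simp
      then show ?thesis by (simp only: fmul_word_right) simp
    qed
    show ?thesis using l r by simp
  qed
qed

lemma fmul_fsub_left: "fmul (fsub a b) c = fsub (fmul a c) (fmul b c)"
  by (simp add: fun_eq_iff fmul_def fsub_def sum_subtractf left_diff_distrib)
lemma fmul_fsub_right: "fmul c (fsub a b) = fsub (fmul c a) (fmul c b)"
  by (simp add: fun_eq_iff fmul_def fsub_def sum_subtractf right_diff_distrib)
lemma fmul_fsmul_left: "fmul (fsmul k a) c = fsmul k (fmul a c)"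
  by (simp add: fun_eq_iff fmul_def fsmul_def sum_distrib_left mult.assoc)
lemma fmul_fsmul_right: "fmul c (fsmul k a) = fsmul k (fmul c a)"
  by (simp add: fun_eq_iff fmul_def fsmul_def sum_distrib_left mult.left_commute)

lemma word_fa: "word w \<in> fa"
proof -
  have "{v. word w v \<noteq> 0} \<subseteq> {w}" by (auto simp: word_def)
  then show ?thesis unfolding fa_def by (auto intro: finite_subset)
qed

lemma hpow_fa: "hpow n \<in> fa"
  unfolding hpow_def by (rule word_fa)

lemma fsmul_word_fa: "fsmul c (word w) \<in> fa"
proof -
  have "{v. fsmul c (word w) v \<noteq> 0} \<subseteq> {w}" by (auto simp: word_def fsmul_def)
  then show ?thesis unfolding fa_def by (auto intro: finite_subset)
qed

lemma comp_fa: "f \<in> fa \<Longrightarrow> comp k f \<in> fa"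
proof -
  assume "f \<in> fa"
  moreover have "{v. comp k f v \<noteq> 0} \<subseteq> {v. f v \<noteq> 0}" by (auto simp: comp_def)
  ultimately show ?thesis unfolding fa_def by (auto intro: finite_subset)
qed

context
  fixes I :: "falg set"
  assumes idl: "is_ideal I"
begin

lemma I_fa: "a \<in> I \<Longrightarrow> a \<in> fa" using idl unfolding is_ideal_def by blast
lemma I_zero: "(\<lambda>_. 0) \<in> I" using idl unfolding is_ideal_def by blast
lemma I_add: "a \<in> I \<Longrightarrow> b \<in> I \<Longrightarrow> fadd a b \<in> I" using idl unfolding is_ideal_def by blast
lemma I_mulL: "a \<in> I \<Longrightarrow> c \<in> fa \<Longrightarrow> fmul c a \<in> I" using idl unfolding is_ideal_def by blast
lemma I_mulR: "a \<in> I \<Longrightarrow> c \<in> fa \<Longrightarrow> fmul a c \<in> I" using idl unfolding is_ideal_def by blast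
lemma I_smul: "a \<in> I \<Longrightarrow> fsmul c a \<in> I"
proof -
  assume "a \<in> I"
  then have "fmul (fsmul c (word [])) a \<in> I" by (rule I_mulL) (rule fsmul_word_fa)
  then show ?thesis by (simp add: fmul_fsmul_left fmul_word_Nil_left)
qed
lemma I_sub: "a \<in> I \<Longrightarrow> b \<in> I \<Longrightarrow> fsub a b \<in> I"
proof -
  assume "a \<in> I" "b \<in> I"
  then have "fadd a (fsmul (-1) b) \<in> I" by (intro I_add I_smul)
  moreover have "fadd a (fsmul (-1) b) = fsub a b" by (simp add: fun_eq_iff fadd_def fsmul_def fsub_def)
  ultimately show ?thesis by simp
qed
lemma I_eq: "a \<in> I \<Longrightarrow> a = b \<Longrightarrow> b \<in> I" by simp

lemma I_comb3: "a1 \<in> I \<Longrightarrow> a2 \<in> I \<Longrightarrow> a3 \<in> I \<Longrightarrow>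
   (\<lambda>v. a1 v + c2 * a2 v + c3 * a3 v) \<in> I"
proof -
  assume "a1 \<in> I" "a2 \<in> I" "a3 \<in> I"
  then have "fadd a1 (fadd (fsmul c2 a2) (fsmul c3 a3)) \<in> I" by (intro I_add I_smul)
  then show ?thesis by (simp add: fadd_def fsmul_def add.assoc)
qed

lemma I_sum: "finite A \<Longrightarrow> (\<forall>w\<in>A. P w \<in> I) \<Longrightarrow> (\<lambda>v. \<Sum>w\<in>A. c w * P w v) \<in> I"
proof (induction A rule: finite_induct)
  case empty
  then show ?case using I_zero by simp
next
  case (insert a A)
  then have "fadd (fsmul (c a) (P a)) (\<lambda>v. \<Sum>w\<in>A. c w * P w v) \<in> I"
    by (intro I_add I_smul) auto
  then show ?case using insert by (simp add: fadd_def fsmul_def)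
qed

end


lemma wdeg_append[simp]: "wdeg (a @ b) = wdeg a + wdeg b"
  by (simp add: wdeg_def)
lemma wdeg_Nil[simp]: "wdeg [] = 0" by (simp add: wdeg_def)
lemma wdeg_Cons: "wdeg (g # w) = wdeg [g] + wdeg w"
  using wdeg_append[of "[g]" w] by simp
lemma wdeg_split: "wdeg v = wdeg (take n v) + wdeg (drop n v)"
  by (metis append_take_drop_id wdeg_append)
lemma wdeg_rep: "wdeg (replicate n H) = 0"
  by (induction n) (auto simp: wdeg_def)

lemma comp_fmul_wordL: "wdeg a = 0 \<Longrightarrow> comp k (fmul (word a) f) = fmul (word a) (comp k f)"
  by (auto simp: fun_eq_iff comp_def fmul_word_left) (metis wdeg_split add_0)+
lemma comp_fmul_wordR: "wdeg b = 0 \<Longrightarrow> comp k (fmul f (word b)) = fmul (comp k f) (word b)"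
  by (auto simp: fun_eq_iff comp_def fmul_word_right) (metis wdeg_split add_0_right)+
lemma comp_fsub: "comp k (fsub a b) = fsub (comp k a) (comp k b)"
  by (simp add: fun_eq_iff comp_def fsub_def)
lemma comp_fsmul: "comp k (fsmul c a) = fsmul c (comp k a)"
  by (simp add: fun_eq_iff comp_def fsmul_def)

lemma fa_decomp: "f \<in> fa \<Longrightarrow> f = (\<lambda>v. \<Sum>w\<in>{w. f w \<noteq> 0}. f w * word w v)"
  unfolding fa_def word_def
  by (auto simp: fun_eq_iff if_distrib[of "\<lambda>x. _ * x"] sum.delta' cong: if_cong)

lemma fmul_sum_left: "fmul (\<lambda>v. \<Sum>w\<in>A. c w * g w v) e = (\<lambda>v. \<Sum>w\<in>A. c w * fmul (g w) e v)"
  unfolding fmul_def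
  by (simp add: fun_eq_iff sum_distrib_left sum_distrib_right mult.assoc sum.swap[of _ A])

lemma fmul_sum_right: "fmul e (\<lambda>v. \<Sum>w\<in>A. c w * g w v) = (\<lambda>v. \<Sum>w\<in>A. c w * fmul e (g w) v)"
  unfolding fmul_def
  by (simp add: fun_eq_iff sum_distrib_left sum_distrib_right mult.left_commute sum.swap[of _ A])


context
  fixes I :: "falg set" and r s :: complex and p :: "complex poly"
  assumes idl: "is_ideal I" and relsI: "rels r s p \<subseteq> I" and r0: "r \<noteq> 0"
begin

lemma lemB: "fsub (word (H # w)) (fsmul (r powi wdeg w) (word (w @ [H]))) \<in> I"
proof (induction w)
  case Nil
  have "fsub (word [H]) (fsmul (r powi wdeg []) (word ([] @ [H]))) = (\<lambda>_. 0)"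
    by (simp add: fun_eq_iff fsub_def fsmul_def)
  then show ?case using I_zero[OF idl] by simp
next
  case (Cons g w')
  define dg where "dg = wdeg [g]"
  define dw where "dw = wdeg w'"
  have step1: "fsub (word (H # g # w')) (fsmul (r powi dg) (word (g # H # w'))) \<in> I"
  proof (cases g)
    case U
    have "fsub (word [H,U]) (fsmul r (word [U,H])) \<in> I" using relsI by (simp add: rels_def)
    then have "fmul (fsub (word [H,U]) (fsmul r (word [U,H]))) (word w') \<in> I"
      by (rule I_mulR[OF idl]) (rule word_fa)
    then show ?thesis using U
      by (simp add: fmul_fsub_left fmul_fsmul_left fmul_word_word dg_def wdeg_def)
  next
    case D
    have "fsub (word [D,H]) (fsmul r (word [H,D])) \<in> I" using relsI by (simp add: rels_def)
    then have "fsmul (- inverse r) (fmul (fsub (word [D,H]) (fsmul r (word [H,D]))) (word w')) \<in> I"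
      by (intro I_smul[OF idl] I_mulR[OF idl] word_fa)
    moreover have "fsmul (- inverse r) (fmul (fsub (word [D,H]) (fsmul r (word [H,D]))) (word w'))
        = fsub (word (H # g # w')) (fsmul (r powi dg) (word (g # H # w')))"
      unfolding fmul_fsub_left fmul_fsmul_left fmul_word_word
      using D r0 by (simp add: dg_def wdeg_def
          fun_eq_iff fsub_def fsmul_def power_int_minus field_simps)
    ultimately show ?thesis by simp
  next
    case H
    have "fsub (word (H # g # w')) (fsmul (r powi dg) (word (g # H # w'))) = (\<lambda>_. 0)"
      using H by (simp add: fun_eq_iff fsub_def fsmul_def dg_def wdeg_def)
    then show ?thesis using I_zero[OF idl] by simp
  qed
  have step2: "fsub (word (g # H # w')) (fsmul (r powi dw) (word (g # w' @ [H]))) \<in> I"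
  proof -
    have "fmul (word [g]) (fsub (word (H # w')) (fsmul (r powi wdeg w') (word (w' @ [H])))) \<in> I"
      using Cons.IH by (rule I_mulL[OF idl]) (rule word_fa)
    then show ?thesis by (simp add: fmul_fsub_right fmul_fsmul_right fmul_word_word dw_def)
  qed
  have "fadd (fsub (word (H # g # w')) (fsmul (r powi dg) (word (g # H # w'))))
           (fsmul (r powi dg) (fsub (word (g # H # w')) (fsmul (r powi dw) (word (g # w' @ [H]))))) \<in> I"
    using step1 step2 by (intro I_add[OF idl] I_smul[OF idl])
  moreover have "wdeg (g # w') = dg + dw" unfolding dg_def dw_def by (rule wdeg_Cons)
  moreover have "r powi (dg + dw) = r powi dg * r powi dw" using r0 by (simp add: power_int_add)
  ultimately show ?case
    by (simp add: fun_eq_iff fadd_def fsub_def fsmul_def algebra_simps)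
qed

lemma lemC:
  assumes f: "f \<in> fa" and hom: "\<And>w. f w \<noteq> 0 \<Longrightarrow> wdeg w = k"
  shows "fsub (fmul (word [H]) f) (fsmul (r powi k) (fmul f (word [H]))) \<in> I"
proof -
  define A where "A = {w. f w \<noteq> 0}"
  have fin: "finite A" using f by (simp add: A_def fa_def)
  have fe: "f = (\<lambda>v. \<Sum>w\<in>A. f w * word w v)" unfolding A_def by (rule fa_decomp[OF f])
  have e1: "fmul (word [H]) f = (\<lambda>v. \<Sum>w\<in>A. f w * word (H # w) v)"
    by (subst arg_cong[where f="fmul (word [H])", OF fe]) (simp add: fmul_sum_right fmul_word_word)
  have e2: "fmul f (word [H]) = (\<lambda>v. \<Sum>w\<in>A. f w * word (w @ [H]) v)"
    by (subst arg_cong[where f="\<lambda>g. fmul g (word [H])", OF fe]) (simp add: fmul_sum_left fmul_word_word)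
  have "(\<lambda>v. \<Sum>w\<in>A. f w * fsub (word (H # w)) (fsmul (r powi wdeg w) (word (w @ [H]))) v) \<in> I"
    using fin by (rule I_sum[OF idl]) (auto intro: lemB)
  moreover have "(\<lambda>v. \<Sum>w\<in>A. f w * fsub (word (H # w)) (fsmul (r powi wdeg w) (word (w @ [H]))) v)
     = fsub (fmul (word [H]) f) (fsmul (r powi k) (fmul f (word [H])))"
    unfolding e1 e2 using hom
    by (auto simp: fun_eq_iff fsub_def fsmul_def A_def sum_subtractf sum_distrib_left right_diff_distrib
        mult.left_commute intro!: sum.cong)
  ultimately show ?thesis by simp
qed


end

definition Top :: "complex \<Rightarrow> int \<Rightarrow> falg \<Rightarrow> falg" where
  "Top r j y = fsub (fmul (word [H]) y) (fsmul (r powi j) (fmul y (word [H])))"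

fun Tl :: "complex \<Rightarrow> int list \<Rightarrow> falg \<Rightarrow> falg" where
  "Tl r [] y = y"
| "Tl r (j # js) y = Top r j (Tl r js y)"

context
  fixes I :: "falg set" and r s :: complex and p :: "complex poly"
  assumes idl: "is_ideal I" and relsI: "rels r s p \<subseteq> I" and r0: "r \<noteq> 0"
begin

lemma TlI: "y \<in> I \<Longrightarrow> Tl r js y \<in> I"
proof (induction js)
  case Nil then show ?case by simp
next
  case (Cons j js)
  then have z: "Tl r js y \<in> I" by simp
  show ?case unfolding Tl.simps Top_def
    by (intro I_sub[OF idl] I_smul[OF idl] I_mulL[OF idl] I_mulR[OF idl] z word_fa)
qed

lemma lemF:
  assumes y: "y \<in> I"
  shows "fsub (comp k (Tl r js y))
     (fsmul (prod_list (map (\<lambda>j. r powi k - r powi j) js)) (fmul (comp k y) (hpow (length js)))) \<in> I"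
proof (induction js)
  case Nil
  have "fsub (comp k (Tl r [] y)) (fsmul (prod_list (map (\<lambda>j. r powi k - r powi j) [])) (fmul (comp k y) (hpow (length [])))) = (\<lambda>_. 0)"
    by (simp add: hpow_def fmul_word_Nil_right fun_eq_iff fsub_def fsmul_def)
  then show ?case using I_zero[OF idl] by simp
next
  case (Cons j js)
  define z where "z = Tl r js y"
  define c where "c = prod_list (map (\<lambda>j. r powi k - r powi j) js)"
  define m where "m = length js"
  define yk where "yk = comp k y"
  define zk where "zk = comp k z"
  define q where "q = fmul yk (hpow m)"
  define q' where "q' = fmul yk (hpow (Suc m))"
  have IH: "fsub zk (fsmul c q) \<in> I" using Cons.IH unfolding zk_def z_def c_def q_def yk_def m_def .
  have yfa: "yk \<in> fa" unfolding yk_def by (rule comp_fa[OF I_fa[OF idl y]])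
  have hom: "\<And>w. yk w \<noteq> 0 \<Longrightarrow> wdeg w = k" by (auto simp: yk_def comp_def split: if_splits)
  have hH: "wdeg [H] = 0" by (simp add: wdeg_def)
  have ck: "comp k (Tl r (j # js) y) = fsub (fmul (word [H]) zk) (fsmul (r powi j) (fmul zk (word [H])))"
    by (simp add: Top_def z_def zk_def comp_fsub comp_fsmul comp_fmul_wordL comp_fmul_wordR hH)
  have a1: "fsub (fmul (word [H]) zk) (fsmul c (fmul (word [H]) q)) \<in> I"
    using I_mulL[OF idl IH word_fa[of "[H]"]] by (simp add: fmul_fsub_right fmul_fsmul_right)
  have a3: "fsub (fmul zk (word [H])) (fsmul c q') \<in> I"
  proof -
    have "fmul q (word [H]) = q'"
      by (simp add: q_def q'_def hpow_def assoc_fww replicate_append_same)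
    then show ?thesis
      using I_mulR[OF idl IH word_fa[of "[H]"]] by (simp add: fmul_fsub_left fmul_fsmul_left)
  qed
  have a2: "fsub (fmul (word [H]) q) (fsmul (r powi k) q') \<in> I"
  proof -
    have "fsub (fmul (word [H]) yk) (fsmul (r powi k) (fmul yk (word [H]))) \<in> I"
      by (rule lemC[OF idl relsI r0 yfa hom])
    then have "fmul (fsub (fmul (word [H]) yk) (fsmul (r powi k) (fmul yk (word [H])))) (hpow m) \<in> I"
      by (rule I_mulR[OF idl]) (rule hpow_fa)
    moreover have "fmul (word [H]) q = fmul (fmul (word [H]) yk) (hpow m)"
      by (simp add: q_def hpow_def assoc_wfw)
    moreover have "fmul (fmul yk (word [H])) (hpow m) = q'"
      by (simp add: q'_def hpow_def assoc_fww)
    ultimately show ?thesis by (simp add: fmul_fsub_left fmul_fsmul_left)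
  qed
  have "(\<lambda>v. fsub (fmul (word [H]) zk) (fsmul c (fmul (word [H]) q)) v
       + c * fsub (fmul (word [H]) q) (fsmul (r powi k) q') v
       + (- (r powi j)) * fsub (fmul zk (word [H])) (fsmul c q') v) \<in> I"
    by (rule I_comb3[OF idl a1 a2 a3])
  moreover have "(\<lambda>v. fsub (fmul (word [H]) zk) (fsmul c (fmul (word [H]) q)) v
       + c * fsub (fmul (word [H]) q) (fsmul (r powi k) q') v
       + (- (r powi j)) * fsub (fmul zk (word [H])) (fsmul c q') v)
     = fsub (comp k (Tl r (j # js) y))
     (fsmul (prod_list (map (\<lambda>j. r powi k - r powi j) (j # js))) (fmul (comp k y) (hpow (length (j # js)))))"
    unfolding ck by (simp add: fun_eq_iff fsub_def fsmul_def c_def[symmetric] yk_def[symmetric]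
        m_def[symmetric] q'_def[symmetric] algebra_simps)
  ultimately show ?case by simp
qed


lemma comp_only:
  assumes f: "f \<in> I" and oth: "\<And>k. k \<noteq> i \<Longrightarrow> comp k f \<in> I"
  shows "comp i f \<in> I"
proof -
  have gen: "finite K \<Longrightarrow> (\<forall>k\<in>K. comp k f \<in> I) \<Longrightarrow> (\<lambda>w. if wdeg w \<in> K then f w else 0) \<in> I" for K
  proof (induction K rule: finite_induct)
    case empty then show ?case using I_zero[OF idl] by simp
  next
    case (insert a K)
    then have "fadd (comp a f) (\<lambda>w. if wdeg w \<in> K then f w else 0) \<in> I"
      by (intro I_add[OF idl]) auto
    moreover have "fadd (comp a f) (\<lambda>w. if wdeg w \<in> K then f w else 0) = (\<lambda>w. if wdeg w \<in> insert a K then f w else 0)"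
      using insert by (auto simp: fun_eq_iff fadd_def comp_def)
    ultimately show ?case by simp
  qed
  define K where "K = wdeg ` {w. f w \<noteq> 0} - {i}"
  have "finite {w. f w \<noteq> 0}" using I_fa[OF idl f] by (simp add: fa_def)
  then have "finite K" by (simp add: K_def)
  moreover have "\<forall>k\<in>K. comp k f \<in> I" using oth by (auto simp: K_def)
  ultimately have g: "(\<lambda>w. if wdeg w \<in> K then f w else 0) \<in> I" by (rule gen)
  have "fsub f (\<lambda>w. if wdeg w \<in> K then f w else 0) = comp i f"
    by (auto simp: fun_eq_iff fsub_def comp_def K_def)
  then show ?thesis using I_sub[OF idl f g] by simp
qed

end

lemma powi_inj:
  fixes r :: complex
  assumes r0: "r \<noteq> 0" and nr: "\<forall>n::nat. n > 0 \<longrightarrow> r ^ n \<noteq> 1" and ab: "a \<noteq> b"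
  shows "r powi a \<noteq> r powi b"
proof
  assume eq: "r powi a = r powi b"
  have nz: "r powi b \<noteq> 0" using r0 by simp
  define d where "d = a - b"
  have d1: "r powi d = 1" using eq nz r0 by (simp add: d_def power_int_diff)
  have "d \<noteq> 0" using ab by (simp add: d_def)
  show False
  proof (cases "d > 0")
    case True
    then have "r ^ nat d = 1" using d1 by (metis power_int_of_nat int_nat_eq less_le)
    then show False using nr True by auto
  next
    case False
    then have "d < 0" using \<open>d \<noteq> 0\<close> by simp
    have "r powi (-d) = 1" using d1 by (simp add: power_int_minus)
    then have "r ^ nat (-d) = 1" using \<open>d < 0\<close> by (metis power_int_of_nat int_nat_eq neg_0_less_iff_less less_le)
    then show False using nr \<open>d < 0\<close> by auto
  qed
qed

theorem mainTheorem9: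
  fixes r s :: complex and \<phi> :: "complex poly" and I :: "falg set" and x :: falg
  assumes "r \<noteq> 0" and "s \<noteq> 0"
    and "\<forall>n::nat. n > 0 \<longrightarrow> r ^ n \<noteq> 1"
    and "is_ideal I" and "RelI r s \<phi> \<subseteq> I"
    and "x \<in> I"
    and "hlen r s \<phi> x \<ge> 1"
  shows "\<forall>i::int. fmul (comp i x) (hpow (hlen r s \<phi> x - 1)) \<in> I"
proof
  fix i :: int
  note r0 = assms(1) and nr = assms(3) and idl = assms(4) and RI = assms(5) and xI = assms(6)
  have relsR: "rels r s \<phi> \<subseteq> RelI r s \<phi>" unfolding RelI_def by blast
  then have relsI: "rels r s \<phi> \<subseteq> I" using RI by blast
  have zR: "(\<lambda>_. 0) \<in> RelI r s \<phi>" unfolding RelI_def is_ideal_def by blast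
  define S where "S = {i. comp i x \<notin> RelI r s \<phi>}"
  have hl: "hlen r s \<phi> x = card S" by (simp add: hlen_def S_def)
  have "finite {w. x w \<noteq> 0}" using I_fa[OF idl xI] by (simp add: fa_def)
  moreover have "S \<subseteq> wdeg ` {w. x w \<noteq> 0}"
  proof
    fix k assume kS: "k \<in> S"
    show "k \<in> wdeg ` {w. x w \<noteq> 0}"
    proof (rule ccontr)
      assume "k \<notin> wdeg ` {w. x w \<noteq> 0}"
      then have "comp k x = (\<lambda>_. 0)" by (force simp: fun_eq_iff comp_def)
      then show False using kS zR by (simp add: S_def)
    qed
  qed
  ultimately have finS: "finite S" by (meson finite_surj)
  show "fmul (comp i x) (hpow (hlen r s \<phi> x - 1)) \<in> I"
  proof (cases "i \<in> S")
    case False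
    then have "comp i x \<in> I" using RI by (auto simp: S_def)
    then show ?thesis by (rule I_mulR[OF idl]) (rule hpow_fa)
  next
    case True
    define js where "js = sorted_list_of_set (S - {i})"
    have setjs: "set js = S - {i}" using finS by (simp add: js_def)
    have lenjs: "length js = hlen r s \<phi> x - 1" using finS True by (simp add: js_def hl)
    define x' where "x' = Tl r js x"
    have x'I: "x' \<in> I" unfolding x'_def by (rule TlI[OF idl relsI r0 xI])
    define c where "c = (\<lambda>k. prod_list (map (\<lambda>j. r powi k - r powi j) js))"
    define q where "q = (\<lambda>k. fmul (comp k x) (hpow (hlen r s \<phi> x - 1)))"
    have F: "fsub (comp k x') (fsmul (c k) (q k)) \<in> I" for k
      using lemF[OF idl relsI r0 xI, of k js] unfolding x'_def c_def q_def lenjs .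
    have oth: "comp k x' \<in> I" if "k \<noteq> i" for k
    proof (cases "k \<in> S")
      case True
      then have "k \<in> set js" using setjs that by simp
      then have "c k = 0" unfolding c_def by (force simp: prod_list_zero_iff)
      then show ?thesis using F[of k] by (simp add: fsub_def fsmul_def)
    next
      case False
      then have "comp k x \<in> I" using RI by (auto simp: S_def)
      then have "fsmul (c k) (q k) \<in> I" unfolding q_def
        by (intro I_smul[OF idl] I_mulR[OF idl] hpow_fa)
      from I_add[OF idl F[of k] this] show ?thesis by (simp add: fadd_def fsub_def fsmul_def)
    qed
    have ci: "comp i x' \<in> I" by (rule comp_only[OF idl relsI r0 x'I oth])
    have cne: "c i \<noteq> 0"
    proof
      assume "c i = 0"
      then obtain j where "j \<in> set js" "r powi i - r powi j = 0" unfolding c_def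
        by (auto simp: prod_list_zero_iff)
      moreover have "j \<noteq> i" using \<open>j \<in> set js\<close> setjs by auto
      ultimately show False using powi_inj[OF r0 nr] by force
    qed
    have "fsub (comp i x') (fsub (comp i x') (fsmul (c i) (q i))) \<in> I"
      by (rule I_sub[OF idl ci F])
    then have "fsmul (inverse (c i)) (fsub (comp i x') (fsub (comp i x') (fsmul (c i) (q i)))) \<in> I"
      by (rule I_smul[OF idl])
    moreover have "fsmul (inverse (c i)) (fsub (comp i x') (fsub (comp i x') (fsmul (c i) (q i)))) = q i"
      using cne by (simp add: fun_eq_iff fsub_def fsmul_def)
    ultimately show ?thesis by (simp add: q_def)
  qed
qed

end
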